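(* Consider the controlled system $\dot x = f(x)+g(x)u$, $y=h(x)$, with $x\in\mathbb{R}^{d_x}$, $u\in\mathbb{R}^{d_u}$, where $f,g,h$ are sufficiently many times differentiable, let $\mathcal{S}\subset\mathbb{R}^{d_x}$ be open and let $i\ge1$ be an integer. Let $x\in\mathcal{S}$ and suppose there exist $L>0$ and a neighborhood $N$ of $x$ such that $$|L_gL_f^{i-1}h(x_a)-L_gL_f^{i-1}h(x_b)|\le L\,|\mathbf{H}_i(x_a)-\mathbf{H}_i(x_b)|\qquad\forall (x_a,x_b)\in N^2.$$ Then for any nonzero $v\in\mathbb{R}^{d_x}$ and any $k\in\{1,\dots,d_u\}$, $$\frac{\partial\mathbf{H}_i}{\partial x}(x)\,v=0\ \Longrightarrow\ \frac{\partial L_{g_k}L_f^{i-1}h}{\partial x}(x)\,v=0.$$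
   Context: $L_f$ is the Lie derivative along $f$, $g_k$ is the $k$-th column of $g$, and $L_g\alpha=(L_{g_1}\alpha,\dots,L_{g_{d_u}}\alpha)$. $\mathbf{H}_i(x)=(h(x),L_fh(x),\dots,L_f^{i-1}h(x))$. *)

theory Defs
  imports "HOL-Analysis.Analysis"
begin

definition lie :: "(real^'n \<Rightarrow> real^'n) \<Rightarrow> (real^'n \<Rightarrow> 'b::real_normed_vector)
                   \<Rightarrow> real^'n \<Rightarrow> 'b" where
  "lie F \<phi> = (\<lambda>z. frechet_derivative \<phi> (at z) (F z))"

definition lie_iter :: "(real^'n \<Rightarrow> real^'n) \<Rightarrow> nat \<Rightarrow> (real^'n \<Rightarrow> 'b::real_normed_vector)
                        \<Rightarrow> real^'n \<Rightarrow> 'b" where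
  "lie_iter f j h = (lie f ^^ j) h"

(* L_g alpha = (L_{g_1} alpha, ..., L_{g_du} alpha), g_k = k-th column of g;
   for vector-valued alpha this is the d_y x d_u matrix whose k-th column is L_{g_k} alpha *)
definition lie_g :: "(real^'n \<Rightarrow> real^'m^'n) \<Rightarrow> (real^'n \<Rightarrow> real^'p) \<Rightarrow> real^'n \<Rightarrow> real^'m^'p" where
  "lie_g g \<alpha> = (\<lambda>z. \<chi> r c. lie (\<lambda>w. column c (g w)) \<alpha> z $ r)"

(* |H_i(xa) - H_i(xb)|, Euclidean norm of the stacked vector
   H_i(x) = (h(x), L_f h(x), ..., L_f^{i-1} h(x)) *)
definition H_dist :: "(real^'n \<Rightarrow> real^'n) \<Rightarrow> (real^'n \<Rightarrow> real^'p) \<Rightarrow> nat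
                      \<Rightarrow> real^'n \<Rightarrow> real^'n \<Rightarrow> real" where
  "H_dist f h i xa xb = sqrt (\<Sum>j<i. (norm (lie_iter f j h xa - lie_iter f j h xb))\<^sup>2)"

end

theory Submission
  imports Defs
begin

lemma dq_lim:
  fixes F :: "'a::real_normed_vector \<Rightarrow> 'b::real_normed_vector"
  assumes "(F has_derivative D) (at x)"
  shows "((\<lambda>t. (F (x + t *\<^sub>R v) - F x) /\<^sub>R t) \<longlongrightarrow> D v) (at (0::real))"
proof -
  have g: "((\<lambda>t::real. x + t *\<^sub>R v) has_derivative (\<lambda>t. t *\<^sub>R v)) (at 0)"
    by (auto intro!: derivative_eq_intros)
  have F': "(F has_derivative D) (at ((\<lambda>t::real. x + t *\<^sub>R v) 0))"
    using assms by simp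
  have c: "((F \<circ> (\<lambda>t::real. x + t *\<^sub>R v)) has_derivative (D \<circ> (\<lambda>t. t *\<^sub>R v))) (at 0)"
    by (rule diff_chain_at[OF g F'])
  have bl: "bounded_linear D" using assms has_derivative_bounded_linear by blast
  from c have "((\<lambda>h. norm (F (x + h *\<^sub>R v) - F x - D (h *\<^sub>R v)) / norm h) \<longlongrightarrow> 0) (at (0::real))"
    unfolding has_derivative_at by (simp add: o_def)
  moreover have "\<forall>\<^sub>F h in at (0::real). norm (F (x + h *\<^sub>R v) - F x - D (h *\<^sub>R v)) / norm h
      = norm ((F (x + h *\<^sub>R v) - F x) /\<^sub>R h - D v)"
  proof (rule eventually_at_filter[THEN iffD2], rule always_eventually, intro allI impI)
    fix h :: real assume "h \<noteq> 0"
    have "D (h *\<^sub>R v) = h *\<^sub>R D v" using bl by (simp add: linear_simps)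
    hence "F (x + h *\<^sub>R v) - F x - D (h *\<^sub>R v) = h *\<^sub>R ((F (x + h *\<^sub>R v) - F x) /\<^sub>R h - D v)"
      using \<open>h \<noteq> 0\<close> by (simp add: algebra_simps)
    thus "norm (F (x + h *\<^sub>R v) - F x - D (h *\<^sub>R v)) / norm h
      = norm ((F (x + h *\<^sub>R v) - F x) /\<^sub>R h - D v)"
      using \<open>h \<noteq> 0\<close> by simp
  qed
  ultimately have "((\<lambda>h. norm ((F (x + h *\<^sub>R v) - F x) /\<^sub>R h - D v)) \<longlongrightarrow> 0) (at (0::real))"
    using tendsto_cong by fastforce
  thus ?thesis
    by (simp add: tendsto_norm_zero_iff LIM_zero_iff)
qed

lemma col_norm_le:
  fixes y :: "real^'p" and Y :: "real^'m^'p"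
  assumes "\<And>r. y $ r = Y $ r $ k"
  shows "norm y \<le> norm Y"
proof -
  have "L2_set (\<lambda>r. norm (y $ r)) UNIV \<le> L2_set (\<lambda>r. norm (Y $ r)) UNIV"
    by (rule L2_set_mono) (use assms component_le_norm_cart[of "Y $ _" k] in auto)
  thus ?thesis by (simp only: norm_vec_def[of y] norm_vec_def[of Y])
qed

theorem lemma4:
  fixes f :: "real^'n \<Rightarrow> real^'n" and g :: "real^'n \<Rightarrow> real^'m^'n"
    and h :: "real^'n \<Rightarrow> real^'p" and S :: "(real^'n) set" and i :: nat
    and x :: "real^'n"
  assumes S_open: "open S"
    and i_pos: "i \<ge> 1"
    and H_diff: "\<forall>j<i. lie_iter f j h differentiable_on S"
    and LgH_diff: "\<forall>k. lie (\<lambda>w. column k (g w)) (lie_iter f (i - 1) h) differentiable_on S"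
    and x_in: "x \<in> S"
    and lip: "\<exists>L>0. \<exists>N. open N \<and> x \<in> N \<and>
               (\<forall>xa\<in>N. \<forall>xb\<in>N. norm (lie_g g (lie_iter f (i - 1) h) xa - lie_g g (lie_iter f (i - 1) h) xb)
                                 \<le> L * H_dist f h i xa xb)"
  shows "\<forall>v k. v \<noteq> 0 \<longrightarrow>
           (\<forall>j<i. frechet_derivative (lie_iter f j h) (at x) v = 0) \<longrightarrow>
           frechet_derivative (lie (\<lambda>w. column k (g w)) (lie_iter f (i - 1) h)) (at x) v = 0"
proof (intro allI impI)
  fix v :: "real^'n" and k :: 'm
  assume zero: "\<forall>j<i. frechet_derivative (lie_iter f j h) (at x) v = 0"
  define \<alpha> where "\<alpha> = lie_iter f (i - 1) h"
  define \<phi> where "\<phi> = lie (\<lambda>w. column k (g w)) \<alpha>"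
  define \<Phi> where "\<Phi> = lie_g g \<alpha>"
  obtain L N where L: "L > 0" and N: "open N" "x \<in> N"
    and bnd: "\<forall>xa\<in>N. \<forall>xb\<in>N. norm (\<Phi> xa - \<Phi> xb) \<le> L * H_dist f h i xa xb"
    using lip unfolding \<Phi>_def \<alpha>_def by blast
  have comp: "\<And>z r. \<phi> z $ r = \<Phi> z $ r $ k"
    unfolding \<phi>_def \<Phi>_def lie_g_def by simp
  have "\<phi> differentiable (at x)"
    using LgH_diff x_in S_open unfolding \<phi>_def \<alpha>_def
    by (meson differentiable_on_eq_differentiable_at)
  hence dphi: "(\<phi> has_derivative frechet_derivative \<phi> (at x)) (at x)"
    using frechet_derivative_works by blast
  have limphi: "((\<lambda>t. (\<phi> (x + t *\<^sub>R v) - \<phi> x) /\<^sub>R t) \<longlongrightarrow> frechet_derivative \<phi> (at x) v) (at (0::real))"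
    by (rule dq_lim[OF dphi])
  have limH: "((\<lambda>t. (lie_iter f j h (x + t *\<^sub>R v) - lie_iter f j h x) /\<^sub>R t) \<longlongrightarrow> 0) (at (0::real))"
    if "j < i" for j
  proof -
    have "lie_iter f j h differentiable (at x)"
      using H_diff that x_in S_open by (meson differentiable_on_eq_differentiable_at)
    hence "(lie_iter f j h has_derivative frechet_derivative (lie_iter f j h) (at x)) (at x)"
      using frechet_derivative_works by blast
    from dq_lim[OF this, of v] show ?thesis using zero that by simp
  qed
  have rhs: "((\<lambda>t. L * sqrt (\<Sum>j<i. (norm ((lie_iter f j h (x + t *\<^sub>R v) - lie_iter f j h x) /\<^sub>R t))\<^sup>2))
      \<longlongrightarrow> L * sqrt (\<Sum>j<i. (norm (0::real^'p))\<^sup>2)) (at (0::real))"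
    by (intro tendsto_intros limH) auto
  have cont: "((\<lambda>t::real. x + t *\<^sub>R v) \<longlongrightarrow> x) (at 0)"
    by (auto intro!: tendsto_eq_intros)
  have evN: "\<forall>\<^sub>F t in at (0::real). x + t *\<^sub>R v \<in> N"
    using topological_tendstoD[OF cont N] .
  have nz: "\<forall>\<^sub>F t in at (0::real). t \<noteq> 0"
    by (simp add: eventually_at_filter)
  have ev: "\<forall>\<^sub>F t in at (0::real). norm ((\<phi> (x + t *\<^sub>R v) - \<phi> x) /\<^sub>R t)
     \<le> L * sqrt (\<Sum>j<i. (norm ((lie_iter f j h (x + t *\<^sub>R v) - lie_iter f j h x) /\<^sub>R t))\<^sup>2)"
    using evN nz
  proof (eventually_elim)
    case (elim t)
    define a where "a = x + t *\<^sub>R v"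
    have aN: "a \<in> N" using elim a_def by simp
    have t0: "\<bar>t\<bar> > 0" using elim by simp
    have "norm ((\<phi> a - \<phi> x) /\<^sub>R t) = norm (\<phi> a - \<phi> x) / \<bar>t\<bar>"
      by (simp add: divide_inverse_commute)
    also have "\<dots> \<le> norm (\<Phi> a - \<Phi> x) / \<bar>t\<bar>"
      by (intro divide_right_mono col_norm_le) (auto simp: comp)
    also have "\<dots> \<le> L * H_dist f h i a x / \<bar>t\<bar>"
      using bnd aN N(2) by (intro divide_right_mono) auto
    also have "H_dist f h i a x / \<bar>t\<bar> = sqrt (\<Sum>j<i. (norm ((lie_iter f j h a - lie_iter f j h x) /\<^sub>R t))\<^sup>2)"
    proof -
      have "H_dist f h i a x / \<bar>t\<bar> = sqrt ((\<Sum>j<i. (norm (lie_iter f j h a - lie_iter f j h x))\<^sup>2) / t\<^sup>2)"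
        unfolding H_dist_def by (simp add: real_sqrt_divide)
      also have "\<dots> = sqrt (\<Sum>j<i. (norm ((lie_iter f j h a - lie_iter f j h x) /\<^sub>R t))\<^sup>2)"
        by (simp add: sum_distrib_left power_mult_distrib power_inverse divide_inverse_commute divide_inverse)
      finally show ?thesis .
    qed
    hence "L * H_dist f h i a x / \<bar>t\<bar> = L * sqrt (\<Sum>j<i. (norm ((lie_iter f j h a - lie_iter f j h x) /\<^sub>R t))\<^sup>2)"
      by (metis times_divide_eq_right)
    finally show ?case unfolding a_def .
  qed
  have "norm (frechet_derivative \<phi> (at x) v) \<le> L * sqrt (\<Sum>j<i. (norm (0::real^'p))\<^sup>2)"
    by (rule tendsto_le[OF _ rhs tendsto_norm[OF limphi] ev]) simp
  hence "norm (frechet_derivative \<phi> (at x) v) \<le> 0" by simp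
  thus "frechet_derivative (lie (\<lambda>w. column k (g w)) (lie_iter f (i - 1) h)) (at x) v = 0"
    unfolding \<phi>_def \<alpha>_def by simp
qed

end
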